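(* Let $M\ge1$ and $\chi,\tilde\chi\in\widetilde{\mathcal W}^-\cup\mathcal W^+_M$ with $\tilde\chi\le\chi$, and let $Q=Q_{\chi,\tilde\chi}$. Then the function $h(t)=\dfrac{Q(t)^2}{t}$ is non-increasing on $\mathbb R_{>0}$.
   Context: $\widetilde{\mathcal W}^-$: convex non-decreasing $\chi:\mathbb R_{\le0}\to\mathbb R_{\le0}$, $\chi(0)=0$, $\chi\not\equiv0$. $\mathcal W^+_M$: increasing concave $\chi:\mathbb R_{\le0}\to\mathbb R_{\le0}$, $\chi(0)=0$, $\chi<0$ on $(-\infty,0)$, $|t\chi'(t)|\le M|\chi(t)|$ for $t\le0$. For $\epsilon>0$, $Q_0(\epsilon)=\sup_{t\le-1}\chi(\epsilon t)/\tilde\chi(t)$; $Q(t)=1$ for $t\ge1$; for $0<t<1$, $Q(t)=(Q_0(t)/Q_0(1))^{1/2}$ if $\chi\in\widetilde{\mathcal W}^-$ and $Q(t)=t^{1/2}$ if $\chi\in\mathcal W^+_M$; $Q(0)=\lim_{s\to0^+}Q(s)$. *)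

theory Defs
  imports "HOL-Analysis.Analysis"
begin

text \<open>Functions on the non-positive reals are modelled as total functions
  real \<Rightarrow> real; only their values on {..0} matter.\<close>

definition Wminus :: "(real \<Rightarrow> real) \<Rightarrow> bool" where
  "Wminus chi \<longleftrightarrow> convex_on {..0} chi \<and> mono_on {..0} chi \<and> chi 0 = 0
     \<and> (\<forall>t\<le>0. chi t \<le> 0) \<and> (\<exists>t\<le>0. chi t \<noteq> 0)"

definition Wplus :: "real \<Rightarrow> (real \<Rightarrow> real) \<Rightarrow> bool" where
  "Wplus M chi \<longleftrightarrow> strict_mono_on {..0} chi \<and> concave_on {..0} chi \<and> chi 0 = 0
     \<and> (\<forall>t\<le>0. chi t \<le> 0) \<and> (\<forall>t<0. chi t < 0)
     \<and> (\<forall>t<0. chi differentiable (at t) \<and> \<bar>t * deriv chi t\<bar> \<le> M * \<bar>chi t\<bar>)"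

definition Q0 :: "(real \<Rightarrow> real) \<Rightarrow> (real \<Rightarrow> real) \<Rightarrow> real \<Rightarrow> real" where
  "Q0 chi chit eps = (SUP t\<in>{..-1}. chi (eps * t) / chit t)"

definition Qpos :: "(real \<Rightarrow> real) \<Rightarrow> (real \<Rightarrow> real) \<Rightarrow> real \<Rightarrow> real" where
  "Qpos chi chit t = (if 1 \<le> t then 1
      else if Wminus chi then sqrt (Q0 chi chit t / Q0 chi chit 1) else sqrt t)"

definition Q :: "(real \<Rightarrow> real) \<Rightarrow> (real \<Rightarrow> real) \<Rightarrow> real \<Rightarrow> real" where
  "Q chi chit t = (if 0 < t then Qpos chi chit t
      else if t = 0 then Lim (at_right 0) (Qpos chi chit) else undefined)"

end

theory Submission
  imports Defs
begin

lemma cls_neg: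
  assumes "Wminus chi \<or> Wplus M chi" "t < 0"
  shows "chi t < 0"
  using assms(1)
proof
  assume W: "Wminus chi"
  hence cv: "convex_on {..0} chi" and mo: "mono_on {..0} chi" and z: "chi 0 = 0"
    and le: "\<forall>t\<le>0. chi t \<le> 0" and ex: "\<exists>t\<le>0. chi t \<noteq> 0"
    unfolding Wminus_def by auto
  obtain t0 where t0: "t0 \<le> 0" "chi t0 \<noteq> 0" using ex by auto
  have t0n: "chi t0 < 0" using le t0 by force
  show "chi t < 0"
  proof (rule ccontr)
    assume "\<not> chi t < 0"
    moreover have "chi t \<le> 0" using le assms(2) by simp
    ultimately have ct: "chi t = 0" by simp
    show False
    proof (cases "t0 < t")
      case True
      define l where "l = t / t0"
      have t0neg: "t0 < 0" using True assms(2) by simp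
      have l0: "0 \<le> l" "l \<le> 1" unfolding l_def using True t0neg assms(2)
        by (auto simp: divide_simps)
      have "chi ((1 - l) *\<^sub>R 0 + l *\<^sub>R t0) \<le> (1 - l) * chi 0 + l * chi t0"
        using convex_onD[OF cv l0, of 0 t0] t0 by simp
      moreover have "(1 - l) *\<^sub>R 0 + l *\<^sub>R t0 = t" unfolding l_def using t0neg by simp
      ultimately have "chi t \<le> l * chi t0" using z by simp
      moreover have "l > 0" unfolding l_def using t0neg assms(2) by (simp add: divide_simps)
      ultimately have "chi t < 0" using t0n by (smt (verit) mult_pos_neg)
      thus False using ct by simp
    next
      case False
      hence "chi t \<le> chi t0" using mo t0 assms(2) by (auto intro: mono_onD)
      thus False using ct t0n by simp
    qed
  qed
next
  assume "Wplus M chi" thus ?thesis using assms(2) unfolding Wplus_def by auto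
qed

lemma cls_mono:
  assumes "Wminus chi \<or> Wplus M chi" "s \<le> t" "t \<le> 0"
  shows "chi s \<le> chi t"
  using assms(1)
proof
  assume "Wminus chi" thus ?thesis using assms unfolding Wminus_def by (auto intro: mono_onD)
next
  assume "Wplus M chi"
  hence "strict_mono_on {..0} chi" unfolding Wplus_def by auto
  hence "mono_on {..0} chi" by (rule strict_mono_on_imp_mono_on)
  thus ?thesis using assms by (auto intro: mono_onD)
qed

lemma conv_scale:
  assumes "Wminus chi" "0 < a" "a \<le> b" "t \<le> 0"
  shows "b * chi (a * t) \<le> a * chi (b * t)"
proof -
  have cv: "convex_on {..0} chi" and z: "chi 0 = 0" using assms(1) unfolding Wminus_def by auto
  define l where "l = a / b"
  have b0: "b > 0" using assms by simp
  have l0: "0 \<le> l" "l \<le> 1" unfolding l_def using assms b0 by (auto simp: divide_simps)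
  have bt: "b * t \<le> 0" using b0 assms(4) by (simp add: mult_nonneg_nonpos)
  have c: "chi (l * (b*t)) \<le> l * chi (b*t)"
    using convex_onD[OF cv l0, of 0 "b*t"] bt z by simp
  have eq: "l * (b*t) = a * t" unfolding l_def using b0 by simp
  have "chi (a*t) \<le> l * chi (b*t)" using c unfolding eq .
  hence "b * chi (a*t) \<le> b * (l * chi (b*t))" using b0 by simp
  also have "\<dots> = a * chi (b*t)" unfolding l_def using b0 by simp
  finally show ?thesis .
qed

lemma ratio_bounds:
  assumes A: "Wminus chi \<or> Wplus M chi" and B: "Wminus chit \<or> Wplus M chit"
    and le: "\<forall>t\<le>0. chit t \<le> chi t"
    and e: "0 < e" "e \<le> 1" and t: "t \<le> -1"
  shows "0 < chi (e*t) / chit t" "chi (e*t) / chit t \<le> 1"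
proof -
  have et: "e * t < 0" using e t by (simp add: mult_pos_neg)
  have c1: "chi (e*t) < 0" using cls_neg[OF A et] .
  have c2: "chit t < 0" using cls_neg[OF B] t by simp
  show "0 < chi (e*t) / chit t" using c1 c2 by (simp add: divide_neg_neg)
  have "t \<le> e * t" using e t by (smt (verit) mult_left_le_one_le mult_minus_right)
  hence "chi t \<le> chi (e*t)" using cls_mono[OF A] et by simp
  hence "chit t \<le> chi (e*t)" using le t by (smt (verit))
  thus "chi (e*t) / chit t \<le> 1" using c2 by (simp add: divide_simps)
qed

lemma Q0_props:
  assumes A: "Wminus chi \<or> Wplus M chi" and B: "Wminus chit \<or> Wplus M chit"
    and le: "\<forall>t\<le>0. chit t \<le> chi t"
    and e: "0 < e" "e \<le> 1"
  shows "bdd_above ((\<lambda>t. chi (e * t) / chit t) ` {..-1})"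
    "\<And>t. t \<le> -1 \<Longrightarrow> chi (e*t) / chit t \<le> Q0 chi chit e"
    "0 < Q0 chi chit e"
proof -
  show bd: "bdd_above ((\<lambda>t. chi (e * t) / chit t) ` {..-1})"
    using ratio_bounds(2)[OF A B le e] by (intro bdd_aboveI[where M=1]) auto
  show up: "\<And>t. t \<le> -1 \<Longrightarrow> chi (e*t) / chit t \<le> Q0 chi chit e"
    unfolding Q0_def by (rule cSUP_upper[OF _ bd]) auto
  show "0 < Q0 chi chit e"
    using up[of "-1"] ratio_bounds(1)[OF A B le e, of "-1"] by simp
qed

lemma Q0_key:
  assumes A: "Wminus chi" and B: "Wminus chit \<or> Wplus M chit"
    and le: "\<forall>t\<le>0. chit t \<le> chi t"
    and ab: "0 < a" "a \<le> b" "b \<le> 1"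
  shows "a * Q0 chi chit b \<le> b * Q0 chi chit a"
proof -
  have A': "Wminus chi \<or> Wplus M chi" using A by simp
  have a1: "a \<le> 1" using ab by simp
  have b0: "0 < b" using ab by simp
  have "Q0 chi chit b \<le> (b / a) * Q0 chi chit a"
    unfolding Q0_def[of chi chit b]
  proof (rule cSUP_least)
    show "{..-1::real} \<noteq> {}" by auto
  next
    fix t :: real assume "t \<in> {..-1}"
    hence t: "t \<le> -1" by simp
    have c2: "chit t < 0" using cls_neg[OF B] t by simp
    have "b * chi (a * t) \<le> a * chi (b * t)" using conv_scale[OF A ab(1,2)] t by simp
    hence "a * chi (b * t) / chit t \<le> b * chi (a * t) / chit t" using c2
      by (simp add: divide_right_mono_neg)
    hence h: "a * (chi (b * t) / chit t) \<le> b * (chi (a * t) / chit t)" by simp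
    have "chi (b * t) / chit t = (a * (chi (b * t) / chit t)) / a" using ab(1) by simp
    also have "\<dots> \<le> (b * (chi (a * t) / chit t)) / a" by (rule divide_right_mono[OF h]) (use ab(1) in simp)
    also have "\<dots> = (b / a) * (chi (a * t) / chit t)" by simp
    finally have "chi (b * t) / chit t \<le> (b / a) * (chi (a * t) / chit t)" .
    also have "\<dots> \<le> (b / a) * Q0 chi chit a"
      using Q0_props(2)[OF A' B le ab(1) a1 t] ab b0 by (intro mult_left_mono) auto
    finally show "chi (b * t) / chit t \<le> b / a * Q0 chi chit a" .
  qed
  thus ?thesis using ab(1) by (simp add: field_simps)
qed

theorem lemma3p6:
  fixes M :: real and chi chit :: "real \<Rightarrow> real"
  assumes "M \<ge> 1"
    and "Wminus chi \<or> Wplus M chi"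
    and "Wminus chit \<or> Wplus M chit"
    and "\<forall>t\<le>0. chit t \<le> chi t"
  shows "antimono_on {0<..} (\<lambda>t. (Q chi chit t)^2 / t)"
proof (rule monotone_onI)
  fix r s :: real assume r: "r \<in> {0<..}" and s: "s \<in> {0<..}" and rs: "r \<le> s"
  have r0: "0 < r" and s0: "0 < s" using r s by auto
  define h where "h = (\<lambda>t. (Q chi chit t)^2 / t)"
  have big: "h t = 1 / t" if "1 \<le> t" for t
    using that unfolding h_def Q_def Qpos_def by simp
  show "(Q chi chit s)^2 / s \<le> (Q chi chit r)^2 / r"
  proof (cases "Wminus chi")
    case False
    have small: "h t = 1" if "0 < t" "t < 1" for t
      using that False unfolding h_def Q_def Qpos_def by simp
    have "h s \<le> h r"
    proof (cases "1 \<le> r")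
      case True thus ?thesis using rs big[of r] big[of s] r0 by (simp add: frac_le)
    next
      case rl: False
      show ?thesis
      proof (cases "1 \<le> s")
        case True thus ?thesis using big[of s] small[of r] r0 rl by simp
      qed (use small[of r] small[of s] r0 s0 rl in simp)
    qed
    thus ?thesis unfolding h_def by simp
  next
    case True
    have pos1: "0 < Q0 chi chit 1" using Q0_props(3)[OF assms(2-4)] by simp
    have small: "h t = Q0 chi chit t / (t * Q0 chi chit 1)" if "0 < t" "t < 1" for t
    proof -
      have "0 < Q0 chi chit t" using Q0_props(3)[OF assms(2-4)] that by simp
      hence "(sqrt (Q0 chi chit t / Q0 chi chit 1))^2 = Q0 chi chit t / Q0 chi chit 1"
        using pos1 by simp
      thus ?thesis using that True unfolding h_def Q_def Qpos_def by simp
    qed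
    have ge1: "1 \<le> h t" if "0 < t" "t < 1" for t
    proof -
      have "t * Q0 chi chit 1 \<le> 1 * Q0 chi chit t"
        using Q0_key[OF True assms(3,4), of t 1] that by simp
      hence "1 * (t * Q0 chi chit 1) \<le> h t * (t * Q0 chi chit 1)"
        using small[OF that] that pos1 by simp
      moreover have "0 < t * Q0 chi chit 1" using that pos1 by simp
      ultimately show ?thesis by (rule mult_right_le_imp_le)
    qed
    have "h s \<le> h r"
    proof (cases "1 \<le> r")
      case True thus ?thesis using rs big[of r] big[of s] r0 by (simp add: frac_le)
    next
      case rl: False
      show ?thesis
      proof (cases "1 \<le> s")
        case True
        have "h s \<le> 1" using big[OF True] True by simp
        thus ?thesis using ge1[of r] r0 rl by simp
      next
        case sl: False
        have "r * Q0 chi chit s \<le> s * Q0 chi chit r"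
          using Q0_key[OF True assms(3,4), of r s] r0 rs sl by simp
        hence "Q0 chi chit s / (s * Q0 chi chit 1) \<le> Q0 chi chit r / (r * Q0 chi chit 1)"
          using r0 s0 pos1 by (simp add: divide_simps mult.commute mult.left_commute)
        thus ?thesis using small r0 s0 rl sl by simp
      qed
    qed
    thus ?thesis unfolding h_def by simp
  qed
qed

end
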